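(* Let $n,m$ be positive integers, $\lambda\in\mathcal{P}^m_n$, and let $k_{i,j}=k_{i,j}(\lambda)$ be defined recursively by $$k_{i,j}=\min\left\{m,\left\lceil\frac{\lambda_i-\sum_{\ell=j+1}^n k_{i,\ell}+\sum_{\ell=i+1}^j k_{\ell,j}}{j-i+1}\right\rceil\right\},\quad 1\le i\le j\le n.$$ Then $k_{i,j}\ge k_{i+1,j}$ for all $1\le i<j\le n$.
   Context: $\mathcal{P}^m_n$ is the set of integer partitions $(\lambda_1\ge\cdots\ge\lambda_n\ge0)$ with $\lambda_i\le m(n-i+1)$ for all $i$. The recursion is carried out in order of decreasing $i$ and, for fixed $i$, decreasing $j$. *)

theory Defs
  imports Complex_Main
begin

definition in_Pmn :: "nat \<Rightarrow> nat \<Rightarrow> (nat \<Rightarrow> nat) \<Rightarrow> bool" where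
  "in_Pmn m n lam \<longleftrightarrow>
     (\<forall>i. 1 \<le> i \<and> i < n \<longrightarrow> lam (i+1) \<le> lam i) \<and>
     (\<forall>i. 1 \<le> i \<and> i \<le> n \<longrightarrow> lam i \<le> m * (n - i + 1))"

function kval :: "nat \<Rightarrow> nat \<Rightarrow> (nat \<Rightarrow> nat) \<Rightarrow> nat \<Rightarrow> nat \<Rightarrow> int" where
  "kval n m lam i j =
     (if 1 \<le> i \<and> i \<le> j \<and> j \<le> n then
        min (int m)
          \<lceil>(real (lam i) - (\<Sum>l\<in>{j+1..n}. real_of_int (kval n m lam i l))
             + (\<Sum>l\<in>{i+1..j}. real_of_int (kval n m lam l j))) / real (j - i + 1)\<rceil>
      else 0)"
  by pat_completeness auto
termination
  by (relation "measures [\<lambda>(n,m,lam,i,j). n - i, \<lambda>(n,m,lam,i,j). n - j]") auto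

end

theory Submission
  imports Defs
begin

declare kval.simps[simp del]

lemma ceil_div_bounds:
  fixes X :: int and d :: nat
  assumes "d > 0"
  shows "int d * (\<lceil>real_of_int X / real d\<rceil> - 1) < X"
    and "X \<le> int d * \<lceil>real_of_int X / real d\<rceil>"
proof -
  let ?c = "\<lceil>real_of_int X / real d\<rceil>"
  have h1: "real_of_int ?c - 1 < real_of_int X / real d" by linarith
  have h2: "real_of_int X / real d \<le> real_of_int ?c" by linarith
  have dpos: "real d > 0" using assms by simp
  from h1 have "real d * (real_of_int ?c - 1) < real_of_int X"
    using dpos by (simp add: field_simps)
  then have "real_of_int (int d * (?c - 1)) < real_of_int X" by simp
  then show "int d * (?c - 1) < X" by linarith
  from h2 have "real_of_int X \<le> real_of_int ?c * real d"
    using pos_divide_le_eq[OF dpos] h2 by blast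
  then have "real_of_int X \<le> real_of_int (int d * ?c)" by (simp add: mult.commute)
  then show "X \<le> int d * ?c" by linarith
qed

lemma kval_bounds:
  fixes n m i j :: nat and lam :: "nat \<Rightarrow> nat"
  assumes "1 \<le> i" "i \<le> j" "j \<le> n"
  defines "X \<equiv> int (lam i) - (\<Sum>l\<in>{j+1..n}. kval n m lam i l) + (\<Sum>l\<in>{i+1..j}. kval n m lam l j)"
  shows "kval n m lam i j \<le> int m"
    and "int (j - i + 1) * (kval n m lam i j - 1) < X"
    and "kval n m lam i j < int m \<Longrightarrow> X \<le> int (j - i + 1) * kval n m lam i j"
proof -
  have e: "(real (lam i) - (\<Sum>l\<in>{j+1..n}. real_of_int (kval n m lam i l))
             + (\<Sum>l\<in>{i+1..j}. real_of_int (kval n m lam l j))) = real_of_int X"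
    unfolding X_def by (simp del: kval.simps)
  have k: "kval n m lam i j = min (int m) \<lceil>real_of_int X / real (j - i + 1)\<rceil>"
    apply (subst kval.simps) using assms(1-3) e by (simp del: kval.simps)
  have d: "j - i + 1 > 0" by simp
  note b = ceil_div_bounds[OF d, of X]
  show "kval n m lam i j \<le> int m" using k by simp
  show "int (j - i + 1) * (kval n m lam i j - 1) < X"
  proof (cases "int m \<le> \<lceil>real_of_int X / real (j - i + 1)\<rceil>")
    case True
    then have kk: "kval n m lam i j = int m" using k by simp
    have mm: "int (j - i + 1) * (int m - 1) \<le> int (j - i + 1) * (\<lceil>real_of_int X / real (j - i + 1)\<rceil> - 1)"
      using True by (intro mult_left_mono) auto
    show ?thesis unfolding kk using le_less_trans[OF mm b(1)] by simp
  next
    case False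
    then show ?thesis using k b(1) by (simp del: kval.simps)
  qed
  show "kval n m lam i j < int m \<Longrightarrow> X \<le> int (j - i + 1) * kval n m lam i j"
    using k b(2) by (auto simp: min_def split: if_splits)
qed


lemma step_lemma:
  fixes n m i j :: nat and lam :: "nat \<Rightarrow> nat"
  assumes i1: "1 \<le> i" and ij: "i < j" and jn: "j \<le> n"
    and H: "int (lam i) - (\<Sum>l\<in>{j+1..n}. kval n m lam i l)
           \<ge> int (lam (i+1)) - (\<Sum>l\<in>{j+1..n}. kval n m lam (i+1) l)"
  shows "kval n m lam i j \<ge> kval n m lam (i+1) j \<and>
    int (lam i) - (\<Sum>l\<in>{j+1..n}. kval n m lam i l) - kval n m lam i j
     \<ge> int (lam (i+1)) - (\<Sum>l\<in>{j+1..n}. kval n m lam (i+1) l) - kval n m lam (i+1) j"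
proof -
  define A where "A = int (lam i) - (\<Sum>l\<in>{j+1..n}. kval n m lam i l)"
  define A' where "A' = int (lam (i+1)) - (\<Sum>l\<in>{j+1..n}. kval n m lam (i+1) l)"
  define C where "C = (\<Sum>l\<in>{i+1+1..j}. kval n m lam l j)"
  define k where "k = kval n m lam i j"
  define k' where "k' = kval n m lam (i+1) j"
  define s where "s = int (j - i)"
  have s1: "s \<ge> 1" using ij unfolding s_def by simp
  have d1: "int (j - i + 1) = s + 1" using ij unfolding s_def by simp
  have d2: "int (j - (i+1) + 1) = s" using ij unfolding s_def by simp
  have sumsplit: "(\<Sum>l\<in>{i+1..j}. kval n m lam l j) = k' + C"
    unfolding C_def k'_def using ij by (simp add: sum.atLeast_Suc_atMost)
  note b = kval_bounds[of i j n m lam, OF i1 less_imp_le[OF ij] jn]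
  note b' = kval_bounds[of "i+1" j n m lam, OF _ _ jn]
  have km: "k \<le> int m" using b(1) unfolding k_def .
  have k'm: "k' \<le> int m" using b'(1) ij unfolding k'_def by simp
  have L1: "(s+1) * (k - 1) < A + k' + C"
    using b(2) unfolding d1 sumsplit A_def k_def by simp
  have U1: "k < int m \<Longrightarrow> A + k' + C \<le> (s+1) * k"
    using b(3) unfolding d1 sumsplit A_def k_def by simp
  have L2: "s * (k' - 1) < A' + C"
    using b'(2) ij unfolding d2 A'_def k'_def C_def by simp
  have U2: "k' < int m \<Longrightarrow> A' + C \<le> s * k'"
    using b'(3) ij unfolding d2 A'_def k'_def C_def by simp
  have HA: "A' \<le> A" using H unfolding A_def A'_def .
  have g1: "k' \<le> k"
  proof (rule ccontr)
    assume "\<not> k' \<le> k"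
    then have kl: "k \<le> k' - 1" by simp
    then have km': "k < int m" using k'm by simp
    have "(s+1) * k \<le> (s+1) * (k' - 1)" using kl s1 by (intro mult_left_mono) auto
    moreover have "(s+1) * (k' - 1) = s * (k' - 1) + (k' - 1)" by (simp add: algebra_simps)
    ultimately show False using U1[OF km'] L2 HA by linarith
  qed
  have g2: "A - k \<ge> A' - k'"
  proof (cases "k = k'")
    case True then show ?thesis using HA by simp
  next
    case False
    then have "k' < k" using g1 by simp
    then have k'm': "k' < int m" using km by simp
    have P: "s * (k - 1 - k') \<ge> 0" using s1 \<open>k' < k\<close> by simp
    have E: "(s+1) * (k - 1) = s * (k - 1 - k') + s * k' + k - 1" by (simp add: algebra_simps)
    show ?thesis using P E L1 U2[OF k'm'] by linarith
  qed
  show ?thesis using g1 g2 unfolding A_def A'_def k_def k'_def by simp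
qed

lemma rows_main:
  fixes n m i j :: nat and lam :: "nat \<Rightarrow> nat"
  assumes i1: "1 \<le> i" and ij: "i + 1 \<le> j" and jn: "j \<le> n" and mono: "lam (i+1) \<le> lam i"
  shows "int (lam i) - (\<Sum>l\<in>{j+1..n}. kval n m lam i l)
           \<ge> int (lam (i+1)) - (\<Sum>l\<in>{j+1..n}. kval n m lam (i+1) l)"
  using jn
proof (induction j rule: inc_induct)
  case base
  then show ?case using mono by simp
next
  case (step x)
  have a: "i < Suc x" "Suc x \<le> n" using step.hyps ij by auto
  note st = step_lemma[OF i1 a step.IH]
  have sp: "\<And>r. (\<Sum>l\<in>{x+1..n}. kval n m lam r l) = kval n m lam r (Suc x) + (\<Sum>l\<in>{Suc x+1..n}. kval n m lam r l)"
    using a(2) by (simp add: sum.atLeast_Suc_atMost)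
  show ?case using st unfolding sp by linarith
qed

theorem lemma4p6:
  fixes n m :: nat and lam :: "nat \<Rightarrow> nat"
  assumes "n > 0" and "m > 0" and "in_Pmn m n lam"
  shows "\<forall>i j. 1 \<le> i \<and> i < j \<and> j \<le> n \<longrightarrow> kval n m lam i j \<ge> kval n m lam (i+1) j"
proof (intro allI impI)
  fix i j assume h: "1 \<le> i \<and> i < j \<and> j \<le> n"
  have mono: "lam (i+1) \<le> lam i" using assms(3) h unfolding in_Pmn_def by auto
  have "int (lam i) - (\<Sum>l\<in>{j+1..n}. kval n m lam i l)
           \<ge> int (lam (i+1)) - (\<Sum>l\<in>{j+1..n}. kval n m lam (i+1) l)"
    using rows_main[of i j n lam m] h mono by simp
  then show "kval n m lam i j \<ge> kval n m lam (i+1) j"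
    using step_lemma[of i j n lam m] h by blast
qed

end
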